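(* Let $F$ be a field with $\mathrm{char}\,F\ne2$ and let $B$ be a $3$-dimensional non-commutative involutive $F$-algebra. Then there is a basis $u,v$ of $\mathrm{Im}\,B$ such that $u\times v=u$ and either $(u,u)=0$ or $(u,v)=0$.
   Context: Algebras are unital, multiplication bilinear and not necessarily associative. $B$ is involutive if there is an anti-automorphism $a\mapsto\bar a$ of order dividing $2$ with $a+\bar a\in F1$ and $a\bar a\in F1$ for all $a$; such algebras are quadratic ($1,a,a^2$ linearly dependent for all $a$). For a quadratic algebra with $\mathrm{char}\,F\ne2$, $\mathrm{Im}\,B=\{u\in B\setminus F1:u^2\in F1\}\cup\{0\}$, $B=F1\oplus\mathrm{Im}\,B$, and for $u,v\in\mathrm{Im}\,B$ one writes $uv=(u,v)1+u\times v$ with $(u,v)\in F$ and $u\times v\in\mathrm{Im}\,B$; this defines a bilinear form $(\cdot,\cdot)$ and an anti-commutative product $\times$ on $\mathrm{Im}\,B$. *)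

theory Defs
  imports Complex_Main
begin

text \<open>An algebra over a field 'a is modelled on the whole type 'b, with scalar
multiplication scale, multiplication mult and unit one.\<close>

definition scalars :: "('a::field \<Rightarrow> 'b::ab_group_add \<Rightarrow> 'b) \<Rightarrow> 'b \<Rightarrow> 'b set" where
  "scalars scale one = range (\<lambda>c. scale c one)"

definition unital_algebra ::
  "('a::field \<Rightarrow> 'b::ab_group_add \<Rightarrow> 'b) \<Rightarrow> ('b \<Rightarrow> 'b \<Rightarrow> 'b) \<Rightarrow> 'b \<Rightarrow> bool" where
  "unital_algebra scale mult one \<longleftrightarrow>
     vector_space scale \<and>
     (\<forall>x. Vector_Spaces.linear scale scale (\<lambda>y. mult x y)) \<and>
     (\<forall>y. Vector_Spaces.linear scale scale (\<lambda>x. mult x y)) \<and>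
     (\<forall>x. mult one x = x \<and> mult x one = x)"

definition involutive_algebra ::
  "('a::field \<Rightarrow> 'b::ab_group_add \<Rightarrow> 'b) \<Rightarrow> ('b \<Rightarrow> 'b \<Rightarrow> 'b) \<Rightarrow> 'b \<Rightarrow> ('b \<Rightarrow> 'b) \<Rightarrow> bool" where
  "involutive_algebra scale mult one cj \<longleftrightarrow>
     unital_algebra scale mult one \<and>
     Vector_Spaces.linear scale scale cj \<and> bij cj \<and>
     (\<forall>a b. cj (mult a b) = mult (cj b) (cj a)) \<and>
     (\<forall>a. cj (cj a) = a) \<and>
     (\<forall>a. a + cj a \<in> scalars scale one \<and> mult a (cj a) \<in> scalars scale one)"

definition ImB :: "('a::field \<Rightarrow> 'b::ab_group_add \<Rightarrow> 'b) \<Rightarrow> ('b \<Rightarrow> 'b \<Rightarrow> 'b) \<Rightarrow> 'b \<Rightarrow> 'b set" where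
  "ImB scale mult one =
     {u. u \<notin> scalars scale one \<and> mult u u \<in> scalars scale one} \<union> {0}"

text \<open>For u, v in Im B: u v = (u,v) 1 + u \<times> v with (u,v) in F and u \<times> v in Im B.\<close>
definition bform :: "('a::field \<Rightarrow> 'b::ab_group_add \<Rightarrow> 'b) \<Rightarrow> ('b \<Rightarrow> 'b \<Rightarrow> 'b) \<Rightarrow> 'b \<Rightarrow> 'b \<Rightarrow> 'b \<Rightarrow> 'a" where
  "bform scale mult one u v =
     (THE c. \<exists>w\<in>ImB scale mult one. mult u v = scale c one + w)"

definition cross :: "('a::field \<Rightarrow> 'b::ab_group_add \<Rightarrow> 'b) \<Rightarrow> ('b \<Rightarrow> 'b \<Rightarrow> 'b) \<Rightarrow> 'b \<Rightarrow> 'b \<Rightarrow> 'b \<Rightarrow> 'b" where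
  "cross scale mult one u v =
     (THE w. w \<in> ImB scale mult one \<and> (\<exists>c. mult u v = scale c one + w))"

end

theory Submission
  imports Defs
begin

locale ia = vector_space scale for scale :: "'a::field \<Rightarrow> 'b::ab_group_add \<Rightarrow> 'b" (infixr \<open>*s\<close> 75) +
  fixes mult :: "'b \<Rightarrow> 'b \<Rightarrow> 'b" and one :: 'b and cj :: "'b \<Rightarrow> 'b"
  assumes inv: "involutive_algebra scale mult one cj"
    and two: "(2::'a) \<noteq> 0"
    and dim3: "dim (UNIV::'b set) = 3"
begin

lemma mr_add: "mult x (y + z) = mult x y + mult x z"
  and mr_scale: "mult x (c *s y) = c *s mult x y"
  and ml_add: "mult (y + z) x = mult y x + mult z x"
  and ml_scale: "mult (c *s y) x = c *s mult y x"
  and m1l: "mult one x = x" and m1r: "mult x one = x"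
  and cj_add: "cj (x + y) = cj x + cj y"
  and cj_scale: "cj (c *s x) = c *s cj x"
  and cj_mult: "cj (mult x y) = mult (cj y) (cj x)"
  and cj_cj: "cj (cj x) = x"
  and tr: "x + cj x \<in> scalars scale one"
  using inv unfolding involutive_algebra_def unital_algebra_def Vector_Spaces.linear_iff
  by (simp_all add: scalars_def)

lemma mr0: "mult x 0 = 0" and mrm: "mult x (- y) = - mult x y"
  and ml0: "mult 0 x = 0" and mlm: "mult (- y) x = - mult y x"
  and cj0: "cj 0 = 0" and cjm: "cj (- x) = - cj x"
  and mrd: "mult x (y - z) = mult x y - mult x z"
  and mld: "mult (y - z) x = mult y x - mult z x"
  and cjd: "cj (x - y) = cj x - cj y"
proof -
  interpret a1: additive "mult x" by standard (rule mr_add)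
  interpret a2: additive "\<lambda>y. mult y x" by standard (rule ml_add)
  interpret a3: additive cj by standard (rule cj_add)
  show "mult x 0 = 0" by (rule a1.zero)
  show "mult x (- y) = - mult x y" by (rule a1.minus)
  show "mult 0 x = 0" by (rule a2.zero)
  show "mult (- y) x = - mult y x" by (rule a2.minus)
  show "cj 0 = 0" by (rule a3.zero)
  show "cj (- x) = - cj x" by (rule a3.minus)
  show "mult x (y - z) = mult x y - mult x z" by (rule a1.diff)
  show "mult (y - z) x = mult y x - mult z x" by (rule a2.diff)
  show "cj (x - y) = cj x - cj y" by (rule a3.diff)
qed

lemma cj_one: "cj one = one"
proof -
  have "mult (cj one) x = x" for x
    by (metis cj_cj cj_mult m1r)
  then have "mult (cj one) one = one" .
  then show ?thesis using m1r by metis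
qed

lemma twice0: "(x::'b) + x = 0 \<Longrightarrow> x = 0"
proof -
  assume h: "x + x = 0"
  have "(2::'a) *s x = 0" using h by (metis one_add_one scale_left_distrib scale_one)
  then show "x = 0" using two by simp
qed

lemma one_ne0: "one \<noteq> 0"
proof
  assume h: "one = 0"
  have "(x::'b) = 0" for x using m1l[of x] h ml0 by simp
  then have "UNIV \<subseteq> span {}" by auto
  then have "card {} = dim (UNIV::'b set)"
    using basis_card_eq_dim[of "{}" UNIV] independent_empty by auto
  then show False using dim3 by simp
qed

lemma scalarsI: "x = c *s one \<Longrightarrow> x \<in> scalars scale one"
  unfolding scalars_def by blast

definition I where "I = {a. cj a = - a}"

lemma subI: "subspace I"
  unfolding subspace_def I_def by (auto simp: cj0 cj_add cj_scale)

lemma I_scal: "a \<in> I \<Longrightarrow> a = c *s one \<Longrightarrow> a = 0"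
proof -
  assume a: "a \<in> I" and c: "a = c *s one"
  have "cj a = a" using c cj_scale cj_one by simp
  then have "a = - a" using a unfolding I_def by simp
  then have "a + a = 0" by (metis add.right_inverse)
  then show "a = 0" by (rule twice0)
qed

lemma tr': "\<exists>c. x + cj x = c *s one"
  using tr unfolding scalars_def by auto

lemma ImB_eq: "ImB scale mult one = I"
proof (intro equalityI subsetI)
  fix u assume u: "u \<in> ImB scale mult one"
  show "u \<in> I"
  proof (cases "u = 0")
    case True then show ?thesis using subspace_0[OF subI] by simp
  next
    case False
    with u have nu: "u \<notin> scalars scale one" and uu: "mult u u \<in> scalars scale one"
      unfolding ImB_def by auto
    obtain t where t: "u + cj u = t *s one" using tr' by blast
    obtain d where d: "mult u u = d *s one" using uu unfolding scalars_def by auto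
    obtain e where e: "mult u (cj u) = e *s one"
      using inv unfolding involutive_algebra_def scalars_def by blast
    have "mult u (cj u) = mult u (t *s one - u)" using t by (metis add_diff_cancel_left')
    also have "\<dots> = t *s u - d *s one" by (simp add: mrd mr_scale m1r d)
    finally have "t *s u = (e + d) *s one" using e by (simp add: scale_left_distrib algebra_simps)
    show ?thesis
    proof (cases "t = 0")
      case True then show ?thesis using t unfolding I_def by (simp add: eq_neg_iff_add_eq_0 add.commute)
    next
      case False
      then have "u = (inverse t * (e + d)) *s one"
        using \<open>t *s u = _\<close> by (metis scale_scale left_inverse scale_one)
      then show ?thesis using nu unfolding scalars_def by auto
    qed
  qed
next
  fix u assume u: "u \<in> I"
  show "u \<in> ImB scale mult one"
  proof (cases "u = 0")
    case True then show ?thesis unfolding ImB_def by simp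
  next
    case False
    have "u \<notin> scalars scale one" using I_scal u False unfolding scalars_def by auto
    moreover obtain e where e: "mult u (cj u) = e *s one"
      using inv unfolding involutive_algebra_def scalars_def by blast
    then have "- mult u u = e *s one" using u unfolding I_def by (simp add: mrm)
    then have "mult u u = (- e) *s one" by (metis minus_minus scale_minus_left)
    then have "mult u u \<in> scalars scale one" by (rule scalarsI)
    ultimately show ?thesis unfolding ImB_def by auto
  qed
qed


abbreviation Bf where "Bf \<equiv> bform scale mult one"
abbreviation Cr where "Cr \<equiv> cross scale mult one"

lemma decomp_ex: "\<exists>c w. w \<in> I \<and> x = c *s one + w"
proof -
  obtain t where t: "x + cj x = t *s one" using tr' by blast
  define c where "c = t / 2"
  have tc: "t - c = c" using two unfolding c_def by (simp add: field_simps)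
  have "cj (x - c *s one) = (t - c) *s one - x"
    using t by (simp add: cjd cj_scale cj_one scale_left_diff_distrib algebra_simps)
  also have "\<dots> = - (x - c *s one)" using tc by simp
  finally have "x - c *s one \<in> I" unfolding I_def by simp
  then show ?thesis by (intro exI[of _ c] exI[of _ "x - c *s one"]) simp
qed

lemma decomp_uniq:
  assumes "w \<in> I" "w' \<in> I" "c *s one + w = d *s one + w'"
  shows "c = d \<and> w = w'"
proof -
  have "c *s one - d *s one = w' - w" using assms(3)
    by (metis add_diff_cancel_left' add_diff_cancel_right' diff_add_eq diff_diff_eq2)
  then have e: "(c - d) *s one = w' - w" by (simp only: scale_left_diff_distrib)
  have "w' - w \<in> I" using assms(1,2) subI by (simp add: subspace_diff)
  then have "(c - d) *s one = 0" using I_scal[OF _ e[symmetric]] e by simp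
  then have "c = d" using one_ne0 by simp
  then show ?thesis using assms(3) by simp
qed

lemma bc:
  assumes w: "w \<in> I" and m: "mult x y = c *s one + w"
  shows "Bf x y = c \<and> Cr x y = w"
proof -
  have "Bf x y = c"
    unfolding bform_def ImB_eq
  proof (rule the_equality)
    show "\<exists>w\<in>I. mult x y = c *s one + w" using w m by blast
    fix c' assume "\<exists>w\<in>I. mult x y = c' *s one + w"
    then obtain w' where "w' \<in> I" "mult x y = c' *s one + w'" by blast
    then have "c' *s one + w' = c *s one + w" using m by metis
    then show "c' = c" using decomp_uniq[of w' w c' c] w \<open>w' \<in> I\<close> by blast
  qed
  moreover have "Cr x y = w"
    unfolding cross_def ImB_eq
  proof (rule the_equality)
    show "w \<in> I \<and> (\<exists>c. mult x y = c *s one + w)" using w m by blast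
    fix w' assume "w' \<in> I \<and> (\<exists>c. mult x y = c *s one + w')"
    then obtain c' where "w' \<in> I" "mult x y = c' *s one + w'" by blast
    then have "c' *s one + w' = c *s one + w" using m by metis
    then show "w' = w" using decomp_uniq[of w' w c' c] w \<open>w' \<in> I\<close> by blast
  qed
  ultimately show ?thesis ..
qed

lemma dec: "Cr x y \<in> I" "mult x y = Bf x y *s one + Cr x y"
proof -
  obtain c w where "w \<in> I" "mult x y = c *s one + w" using decomp_ex by blast
  note h = this bc[OF this]
  from h show "Cr x y \<in> I" by simp
  from h show "mult x y = Bf x y *s one + Cr x y" by simp
qed

lemma I_add: "x \<in> I \<Longrightarrow> y \<in> I \<Longrightarrow> x + y \<in> I"
  using subI by (simp add: subspace_add)
lemma I_scale: "x \<in> I \<Longrightarrow> c *s x \<in> I"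
  using subI by (simp add: subspace_scale)
lemma I_neg: "x \<in> I \<Longrightarrow> - x \<in> I"
  unfolding I_def by (simp add: cjm)

lemma rlin: "Cr x (y + z) = Cr x y + Cr x z \<and> Bf x (y + z) = Bf x y + Bf x z"
proof -
  have "mult x (y + z) = (Bf x y + Bf x z) *s one + (Cr x y + Cr x z)"
    using dec(2)[of x y] dec(2)[of x z] by (simp add: mr_add scale_left_distrib algebra_simps)
  from bc[OF I_add[OF dec(1) dec(1)] this] show ?thesis by simp
qed

lemma rscale: "Cr x (a *s y) = a *s Cr x y \<and> Bf x (a *s y) = a * Bf x y"
proof -
  have "mult x (a *s y) = (a * Bf x y) *s one + a *s Cr x y"
    using dec(2)[of x y] by (simp add: mr_scale scale_right_distrib)
  from bc[OF I_scale[OF dec(1)] this] show ?thesis by simp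
qed

lemma llin: "Cr (y + z) x = Cr y x + Cr z x"
proof -
  have "mult (y + z) x = (Bf y x + Bf z x) *s one + (Cr y x + Cr z x)"
    using dec(2)[of y x] dec(2)[of z x] by (simp add: ml_add scale_left_distrib algebra_simps)
  from bc[OF I_add[OF dec(1) dec(1)] this] show ?thesis by simp
qed

lemma lscale: "Cr (a *s y) x = a *s Cr y x"
proof -
  have "mult (a *s y) x = (a * Bf y x) *s one + a *s Cr y x"
    using dec(2)[of y x] by (simp add: ml_scale scale_right_distrib)
  from bc[OF I_scale[OF dec(1)] this] show ?thesis by simp
qed

lemma anti:
  assumes u: "u \<in> I" and v: "v \<in> I"
  shows "Cr v u = - Cr u v \<and> Bf v u = Bf u v"
proof -
  have "mult v u = mult (cj v) (cj u)" using u v unfolding I_def by (simp add: mlm mrm)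
  also have "\<dots> = cj (mult u v)" by (simp add: cj_mult)
  also have "\<dots> = Bf u v *s one + cj (Cr u v)"
    by (subst dec(2)) (simp add: cj_add cj_scale cj_one)
  also have "\<dots> = Bf u v *s one + - Cr u v" using dec(1)[of u v] unfolding I_def by simp
  finally have "mult v u = Bf u v *s one + - Cr u v" .
  from bc[OF I_neg[OF dec(1)] this] show ?thesis by simp
qed

lemma self0: "u \<in> I \<Longrightarrow> Cr u u = 0"
  using anti[of u u] twice0 by (metis add.right_inverse)

lemma Cr0r: "Cr x 0 = 0"
  using rscale[of x 0 0] by simp
lemma Cr0l: "Cr 0 x = 0"
  using lscale[of 0 0 x] by simp

lemma noncomm_cross:
  assumes "\<exists>a b. mult a b \<noteq> mult b a"
  shows "\<exists>e\<in>I. \<exists>f\<in>I. Cr e f \<noteq> 0"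
proof (rule ccontr)
  assume h: "\<not> ?thesis"
  have comm: "mult e f = mult f e" if "e \<in> I" "f \<in> I" for e f
  proof -
    have "mult e f = Bf e f *s one" using dec(2)[of e f] h that by simp
    moreover have "mult f e = Bf f e *s one" using dec(2)[of f e] h that by simp
    ultimately show ?thesis using anti[OF that] by simp
  qed
  obtain a b where ab: "mult a b \<noteq> mult b a" using assms by blast
  obtain c e where e: "e \<in> I" "a = c *s one + e" using decomp_ex by blast
  obtain d f where f: "f \<in> I" "b = d *s one + f" using decomp_ex by blast
  have "mult a b = (c * d) *s one + c *s f + d *s e + mult e f"
    using e f by (simp add: ml_add mr_add ml_scale mr_scale m1l m1r algebra_simps)
  moreover have "mult b a = (c * d) *s one + c *s f + d *s e + mult f e"
    using e f by (simp add: ml_add mr_add ml_scale mr_scale m1l m1r algebra_simps mult.commute)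
  ultimately show False using ab comm[OF e(1) f(1)] by simp
qed


lemma ind2:
  assumes u: "u \<in> I" and v: "v \<in> I" and nz: "Cr u v \<noteq> 0"
    and h: "\<alpha> *s u + \<beta> *s v = 0"
  shows "\<alpha> = 0 \<and> \<beta> = 0"
proof -
  have a0: "\<alpha> = 0"
  proof (rule ccontr)
    assume a: "\<alpha> \<noteq> 0"
    have "\<alpha> *s u = (- \<beta>) *s v" using h by (simp add: eq_neg_iff_add_eq_0)
    then have "inverse \<alpha> *s (\<alpha> *s u) = inverse \<alpha> *s ((- \<beta>) *s v)" by simp
    then have "u = (inverse \<alpha> * - \<beta>) *s v" using a by simp
    then have "Cr u v = (inverse \<alpha> * - \<beta>) *s Cr v v" using lscale by metis
    then show False using nz self0[OF v] by simp
  qed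
  then have "\<beta> *s v = 0" using h by simp
  moreover have "v \<noteq> 0" using nz Cr0r by metis
  ultimately show ?thesis using a0 by simp
qed

lemma indep_of:
  assumes u: "u \<in> I" and v: "v \<in> I" and nz: "Cr u v \<noteq> 0"
  shows "u \<noteq> v" "\<not> dependent {u, v}" "u \<noteq> 0" "v \<noteq> 0"
proof -
  show "u \<noteq> v" using nz self0 u by metis
  show v0: "v \<noteq> 0" using nz Cr0r by metis
  show "u \<noteq> 0" using nz Cr0l by metis
  have "u \<notin> span {v}"
  proof
    assume "u \<in> span {v}"
    then obtain k where "u = k *s v" unfolding span_singleton by auto
    then have "1 *s u + (- k) *s v = 0" by simp
    then show False using ind2[OF u v nz] by fastforce
  qed
  then show "\<not> dependent {u, v}"
    using v0 by (simp add: independent_insert span_base)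
qed

lemma span2: "x \<in> span {u, v} \<Longrightarrow> \<exists>a b. x = a *s u + b *s v"
proof -
  assume "x \<in> span {u, v}"
  then obtain k where "x - k *s u \<in> span {v}" unfolding span_insert[of u "{v}"] by auto
  then obtain b where "x - k *s u = b *s v" unfolding span_singleton by auto
  then have "x = k *s u + b *s v" by (metis diff_add_cancel add.commute)
  then show ?thesis by blast
qed

lemma span_sub: "u \<in> I \<Longrightarrow> v \<in> I \<Longrightarrow> span {u, v} \<subseteq> I"
  by (rule span_minimal) (auto simp: subI)

lemma one_notI: "one \<notin> I"
  using I_scal[of one 1] one_ne0 by auto

lemma span_full:
  assumes u: "u \<in> I" and v: "v \<in> I" and nz: "Cr u v \<noteq> 0"
  shows "I \<subseteq> span {u, v}"
proof
  fix x assume x: "x \<in> I"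
  show "x \<in> span {u, v}"
  proof (rule ccontr)
    assume nx: "x \<notin> span {u, v}"
    have xs: "x \<notin> span {one, u, v}"
    proof
      assume "x \<in> span {one, u, v}"
      then obtain k where k: "x - k *s one \<in> span {u, v}" unfolding span_insert[of one "{u,v}"] by auto
      then have "x - k *s one \<in> I" using span_sub[OF u v] by auto
      then have "x - (x - k *s one) \<in> I" using subspace_diff[OF subI x] by blast
      then have "k *s one \<in> I" by simp
      then have "k *s one = 0" using I_scal by blast
      then show False using k nx by (metis diff_zero)
    qed
    have os: "one \<notin> span {u, v}" using span_sub[OF u v] one_notI by auto
    have ind: "\<not> dependent {u, v}" using indep_of[OF u v nz] by simp
    have ind3: "\<not> dependent {one, u, v}"
      using ind os span_base[of one "{u,v}"] by (subst independent_insert) auto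
    have ind4: "\<not> dependent {x, one, u, v}"
      using ind3 xs span_base[of x "{one,u,v}"] by (subst independent_insert) auto
    have d1: "x \<noteq> one" "x \<noteq> u" "x \<noteq> v"
      using xs span_base[of _ "{one,u,v}"] by auto
    have d2: "one \<noteq> u" "one \<noteq> v"
      using os span_base[of _ "{u,v}"] by auto
    have c4: "card {x, one, u, v} = 4"
      using d1 d2 indep_of(1)[OF u v nz] by simp
    obtain B where B: "independent B" "UNIV \<subseteq> span B" "card B = dim (UNIV :: 'b set)"
      using basis_exists[of UNIV] by blast
    have fB: "finite B" using B(3) dim3 card.infinite by force
    have "card {x, one, u, v} \<le> card B" using independent_span_bound[OF fB ind4] B(2) by auto
    then show False using c4 B(3) dim3 by simp
  qed
qed

lemma fin:
  assumes u: "u \<in> I" and v: "v \<in> I" and c: "Cr u v = u" and u0: "u \<noteq> 0"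
    and b: "Bf u u = 0 \<or> Bf u v = 0"
  shows "\<exists>u v. u \<in> ImB scale mult one \<and> v \<in> ImB scale mult one \<and>
           u \<noteq> v \<and> \<not> dependent {u, v} \<and>
           span {u, v} = ImB scale mult one \<and>
           Cr u v = u \<and> (Bf u u = 0 \<or> Bf u v = 0)"
proof (intro exI conjI)
  have nz: "Cr u v \<noteq> 0" using c u0 by simp
  show "u \<in> ImB scale mult one" "v \<in> ImB scale mult one" using u v ImB_eq by auto
  show "u \<noteq> v" "\<not> dependent {u, v}" using indep_of[OF u v nz] by auto
  show "span {u, v} = ImB scale mult one"
    using span_full[OF u v nz] span_sub[OF u v] ImB_eq by auto
  show "Cr u v = u" by (fact c)
  show "Bf u u = 0 \<or> Bf u v = 0" by (fact b)
qed


lemma main: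
  assumes nc: "\<exists>a b. mult a b \<noteq> mult b a"
  shows "\<exists>u v. u \<in> ImB scale mult one \<and> v \<in> ImB scale mult one \<and>
           u \<noteq> v \<and> \<not> dependent {u, v} \<and>
           span {u, v} = ImB scale mult one \<and>
           Cr u v = u \<and> (Bf u u = 0 \<or> Bf u v = 0)"
proof -
  obtain e f where e: "e \<in> I" and f: "f \<in> I" and nz: "Cr e f \<noteq> 0"
    using noncomm_cross[OF nc] by blast
  define w where "w = Cr e f"
  have wI: "w \<in> I" unfolding w_def by (rule dec(1))
  have w0: "w \<noteq> 0" using nz w_def by simp
  obtain a b where ab: "w = a *s e + b *s f"
    using span2 span_full[OF e f nz] wI by blast
  have cwe: "Cr w e = (- b) *s w"
  proof -
    have "Cr w e = Cr (a *s e) e + Cr (b *s f) e" using ab llin by simp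
    also have "\<dots> = a *s Cr e e + b *s Cr f e" using lscale by simp
    also have "\<dots> = b *s (- w)" using self0[OF e] anti[OF e f] unfolding w_def by simp
    finally show ?thesis by simp
  qed
  have cwf: "Cr w f = a *s w"
    using ab llin lscale self0[OF f] by (simp add: w_def)
  obtain v0 where v0: "v0 \<in> I" "Cr w v0 = w"
  proof (cases "a = 0")
    case False
    have "Cr w (inverse a *s f) = w" using cwf rscale False by simp
    then show ?thesis using that I_scale[OF f] by blast
  next
    case True
    then have "b \<noteq> 0" using ab w0 by auto
    have "Cr w ((- inverse b) *s e) = (- inverse b) *s ((- b) *s w)" using cwe rscale by metis
    also have "\<dots> = w" using \<open>b \<noteq> 0\<close> by simp
    finally have "Cr w ((- inverse b) *s e) = w" .
    then show ?thesis using that I_scale[OF e] by blast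
  qed
  show ?thesis
  proof (cases "Bf w w = 0")
    case True
    then show ?thesis using fin[OF wI v0(1) v0(2) w0] by blast
  next
    case False
    define \<mu> where "\<mu> = - Bf w v0 / Bf w w"
    define v where "v = v0 + \<mu> *s w"
    have vI: "v \<in> I" unfolding v_def using v0(1) wI I_add I_scale by blast
    have "Cr w v = w" unfolding v_def using rlin rscale self0[OF wI] v0(2) by simp
    moreover have "Bf w v = 0"
    proof -
      have "Bf w v = Bf w v0 + \<mu> * Bf w w" unfolding v_def using rlin rscale by metis
      then show ?thesis using False by (simp add: \<mu>_def)
    qed
    ultimately show ?thesis using fin[OF wI vI _ w0] by blast
  qed
qed

end

theorem lemma4p7:
  fixes scale :: "'a::field \<Rightarrow> 'b::ab_group_add \<Rightarrow> 'b"
    and mult :: "'b \<Rightarrow> 'b \<Rightarrow> 'b" and one :: 'b and cj :: "'b \<Rightarrow> 'b"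
  assumes char: "(2::'a) \<noteq> 0"
    and inv: "involutive_algebra scale mult one cj"
    and dim3: "vector_space.dim scale (UNIV :: 'b set) = 3"
    and noncomm: "\<exists>a b. mult a b \<noteq> mult b a"
  shows "\<exists>u v. u \<in> ImB scale mult one \<and> v \<in> ImB scale mult one \<and>
           u \<noteq> v \<and> \<not> module.dependent scale {u, v} \<and>
           module.span scale {u, v} = ImB scale mult one \<and>
           cross scale mult one u v = u \<and>
           (bform scale mult one u u = 0 \<or> bform scale mult one u v = 0)"
proof -
  have vs: "vector_space scale"
    using inv unfolding involutive_algebra_def unital_algebra_def by blast
  interpret ia scale mult one cj
    by (rule ia.intro[OF vs]) (unfold_locales, fact inv, fact char, fact dim3)
  show ?thesis using main[OF noncomm] .
qed

end
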